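(* Let $\Gamma\colon\mathbb{R}^d\to\mathbb{R}$ be continuously differentiable with globally Lipschitz gradient, consider the gradient flow $\frac{d}{dt}\vartheta_t=-\nabla\Gamma(\vartheta_t)$ (so $\bar f=-\nabla\Gamma$), and assume the limit $\bar f_\infty(\theta)=\lim_{r\to\infty}r^{-1}\bar f(r\theta)$ exists for every $\theta\in\mathbb{R}^d$. Let $\Gamma_\infty(\theta)=\lim_{r\to\infty}r^{-2}\Gamma(r\theta)$. Suppose that $\Gamma_\infty$ is $C^1$ and $\Gamma_\infty(\theta)>0$ for $\theta\ne0$. Then the ODE@$\infty$, $\frac{d}{dt}\vartheta^\infty_t=\bar f_\infty(\vartheta^\infty_t)$, is exponentially asymptotically stable: there are $B<\infty$ and $\delta>0$ such that for every initial condition $\vartheta^\infty_0\in\mathbb{R}^d$, $$\|\vartheta^\infty_t\|^2\le B\|\vartheta^\infty_0\|^2e^{-\delta t},\qquad t\ge0.$$ Consequently, the gradient flow is ultimately bounded: there is $B'<\infty$ such that every solution satisfies $\|\vartheta_t\|\le B'$ for all sufficiently large $t$. *)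

theory Defs
  imports "HOL-Analysis.Analysis"
begin

end

theory Submission
  imports Defs
begin

lemma decr_lemma:
  fixes W W' :: "real \<Rightarrow> real"
  assumes D: "\<And>t. t \<ge> 0 \<Longrightarrow> (W has_real_derivative W' t) (at t within {0..})"
    and N: "\<And>t. t \<ge> 0 \<Longrightarrow> W' t \<le> 0" and t: "t \<ge> 0"
  shows "W t \<le> W 0"
proof (rule DERIV_nonpos_imp_decreasing_open[OF t])
  fix s assume s: "0 < s" "s < t"
  have "at s within {0..} = at s"
    by (rule at_within_open_subset[where S="{0<..}"]) (use s in auto)
  with D[of s] N[of s] s show "\<exists>y. DERIV W s :> y \<and> y \<le> 0" by auto
next
  show "continuous_on {0..t} W"
    unfolding continuous_on_eq_continuous_within
  proof
    fix s assume "s \<in> {0..t}"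
    then have "continuous (at s within {0..}) W"
      using D[of s] by (auto intro: DERIV_continuous)
    then show "continuous (at s within {0..t}) W"
      by (rule continuous_within_subset) auto
  qed
qed

lemma normsq_deriv:
  fixes x :: "real \<Rightarrow> 'a::real_inner"
  assumes "(x has_vector_derivative v) (at t within S)"
  shows "((\<lambda>t. (norm (x t))\<^sup>2) has_real_derivative 2 * (x t \<bullet> v)) (at t within S)"
proof -
  have "((\<lambda>t. x t \<bullet> x t) has_derivative (\<lambda>h. x t \<bullet> (h *\<^sub>R v) + (h *\<^sub>R v) \<bullet> x t)) (at t within S)"
    using assms unfolding has_vector_derivative_def by (intro has_derivative_inner)
  moreover have "(\<lambda>h. x t \<bullet> (h *\<^sub>R v) + (h *\<^sub>R v) \<bullet> x t) = (*) (2 * (x t \<bullet> v))"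
    by (auto simp: fun_eq_iff inner_commute algebra_simps)
  ultimately show ?thesis
    by (simp add: has_field_derivative_def power2_norm_eq_inner)
qed

lemma ray_deriv:
  fixes \<Gamma> :: "'a::real_inner \<Rightarrow> real"
  assumes grad: "\<And>x. (\<Gamma> has_derivative (\<lambda>h. g x \<bullet> h)) (at x)"
  shows "((\<lambda>r. \<Gamma> (r *\<^sub>R \<theta>)) has_real_derivative (g (r *\<^sub>R \<theta>) \<bullet> \<theta>)) (at r)"
proof -
  have "((\<lambda>r. r *\<^sub>R \<theta>) has_derivative (\<lambda>h. h *\<^sub>R \<theta>)) (at r)"
    by (auto intro!: derivative_eq_intros)
  from has_derivative_compose[OF this grad]
  show ?thesis unfolding has_field_derivative_def
    by (simp add: o_def mult_commute_abs)
qed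

lemma G_formula:
  fixes \<Gamma> :: "'a::real_inner \<Rightarrow> real"
  assumes grad: "\<And>x. (\<Gamma> has_derivative (\<lambda>h. g x \<bullet> h)) (at x)"
    and F_lim: "((\<lambda>r. (- g (r *\<^sub>R \<theta>)) /\<^sub>R r) \<longlongrightarrow> F \<theta>) at_top"
    and G_lim: "((\<lambda>r. \<Gamma> (r *\<^sub>R \<theta>) / r\<^sup>2) \<longlongrightarrow> G \<theta>) at_top"
  shows "G \<theta> = - (F \<theta> \<bullet> \<theta>) / 2"
proof -
  have "((\<lambda>r. ((- g (r *\<^sub>R \<theta>)) /\<^sub>R r) \<bullet> \<theta>) \<longlongrightarrow> F \<theta> \<bullet> \<theta>) at_top"
    by (intro tendsto_inner F_lim tendsto_const)
  then have "((\<lambda>r. - (1/2) * (((- g (r *\<^sub>R \<theta>)) /\<^sub>R r) \<bullet> \<theta>)) \<longlongrightarrow> - (1/2) * (F \<theta> \<bullet> \<theta>)) at_top"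
    by (intro tendsto_mult tendsto_const)
  moreover have "(\<lambda>r. - (1/2) * (((- g (r *\<^sub>R \<theta>)) /\<^sub>R r) \<bullet> \<theta>)) = (\<lambda>r. (g (r *\<^sub>R \<theta>) \<bullet> \<theta>) / (2 * r))"
    by (auto simp: fun_eq_iff field_simps)
  ultimately have lim: "((\<lambda>r. (g (r *\<^sub>R \<theta>) \<bullet> \<theta>) / (2 * r)) \<longlongrightarrow> - (F \<theta> \<bullet> \<theta>) / 2) at_top"
    by simp
  have "((\<lambda>r. \<Gamma> (r *\<^sub>R \<theta>) / r\<^sup>2) \<longlongrightarrow> - (F \<theta> \<bullet> \<theta>) / 2) at_top"
  proof (rule lhospital_at_top_at_top[where g'="\<lambda>r. 2 * r" and f'="\<lambda>r. g (r *\<^sub>R \<theta>) \<bullet> \<theta>"])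
    show "filterlim (\<lambda>x::real. x\<^sup>2) at_top at_top"
      using filterlim_at_top_mult_at_top[OF filterlim_ident filterlim_ident] by (simp add: power2_eq_square)
    show "\<forall>\<^sub>F x in at_top. 2 * x \<noteq> (0::real)"
      using eventually_gt_at_top[of "0::real"] by eventually_elim auto
    show "\<forall>\<^sub>F x in at_top. ((\<lambda>r. \<Gamma> (r *\<^sub>R \<theta>)) has_real_derivative g (x *\<^sub>R \<theta>) \<bullet> \<theta>) (at x)"
      by (intro always_eventually allI ray_deriv[OF grad])
    show "\<forall>\<^sub>F x in at_top. ((\<lambda>x. x\<^sup>2) has_real_derivative 2 * x) (at x)"
      by (intro always_eventually allI) (auto intro!: derivative_eq_intros)
  qed (rule lim)
  from tendsto_unique[OF _ G_lim this] show ?thesis by simp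
qed

lemma G_homog:
  fixes \<Gamma> :: "'a::real_normed_vector \<Rightarrow> real"
  assumes G_lim: "\<And>\<theta>. ((\<lambda>r. \<Gamma> (r *\<^sub>R \<theta>) / r\<^sup>2) \<longlongrightarrow> G \<theta>) at_top"
    and k: "k > 0"
  shows "G (k *\<^sub>R \<theta>) = k\<^sup>2 * G \<theta>"
proof -
  have f: "filterlim (\<lambda>r. r * k) at_top at_top"
    by (rule filterlim_at_top_mult_tendsto_pos[OF tendsto_const k filterlim_ident])
  have "((\<lambda>r. \<Gamma> ((r * k) *\<^sub>R \<theta>) / (r * k)\<^sup>2) \<longlongrightarrow> G \<theta>) at_top"
    using filterlim_compose[OF G_lim f] by (simp add: o_def)
  then have "((\<lambda>r. k\<^sup>2 * (\<Gamma> ((r * k) *\<^sub>R \<theta>) / (r * k)\<^sup>2)) \<longlongrightarrow> k\<^sup>2 * G \<theta>) at_top"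
    by (intro tendsto_mult tendsto_const)
  moreover have "\<forall>\<^sub>F r in at_top. k\<^sup>2 * (\<Gamma> ((r * k) *\<^sub>R \<theta>) / (r * k)\<^sup>2) = \<Gamma> (r *\<^sub>R (k *\<^sub>R \<theta>)) / r\<^sup>2"
    using eventually_gt_at_top[of "0::real"] 
  proof eventually_elim
    case (elim r)
    have e1: "(r * k) *\<^sub>R \<theta> = r *\<^sub>R (k *\<^sub>R \<theta>)" by simp
    have e2: "(r * k)\<^sup>2 = r\<^sup>2 * k\<^sup>2" by (rule power_mult_distrib)
    have "r\<^sup>2 \<noteq> 0" "k\<^sup>2 \<noteq> 0" using elim k by auto
    then show ?case unfolding e1 e2 by (simp add: field_simps)
  qed
  ultimately have "((\<lambda>r. \<Gamma> (r *\<^sub>R (k *\<^sub>R \<theta>)) / r\<^sup>2) \<longlongrightarrow> k\<^sup>2 * G \<theta>) at_top"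
    by (rule Lim_transform_eventually)
  from tendsto_unique[OF _ G_lim this] show ?thesis by simp
qed


theorem proposition2p11:
  fixes \<Gamma> :: "'a::euclidean_space \<Rightarrow> real"
    and g :: "'a \<Rightarrow> 'a"
    and F :: "'a \<Rightarrow> 'a"
    and G :: "'a \<Rightarrow> real"
  assumes grad: "\<And>x. (\<Gamma> has_derivative (\<lambda>h. g x \<bullet> h)) (at x)"
    and grad_cont: "continuous_on UNIV g"
    and grad_lip: "\<exists>L. \<forall>x y. norm (g x - g y) \<le> L * norm (x - y)"
    and F_lim: "\<And>\<theta>. ((\<lambda>r. (- g (r *\<^sub>R \<theta>)) /\<^sub>R r) \<longlongrightarrow> F \<theta>) at_top"
    and G_lim: "\<And>\<theta>. ((\<lambda>r. \<Gamma> (r *\<^sub>R \<theta>) / r\<^sup>2) \<longlongrightarrow> G \<theta>) at_top"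
    and G_C1: "\<exists>G'. (\<forall>x. (G has_derivative (\<lambda>h. G' x \<bullet> h)) (at x)) \<and> continuous_on UNIV G'"
    and G_pos: "\<And>\<theta>. \<theta> \<noteq> 0 \<Longrightarrow> G \<theta> > 0"
  shows "(\<exists>B \<delta>. \<delta> > 0 \<and>
            (\<forall>x :: real \<Rightarrow> 'a.
               (\<forall>t\<ge>0. (x has_vector_derivative F (x t)) (at t within {0..})) \<longrightarrow>
               (\<forall>t\<ge>0. (norm (x t))\<^sup>2 \<le> B * (norm (x 0))\<^sup>2 * exp (- \<delta> * t))))
       \<and> (\<exists>B'. \<forall>y :: real \<Rightarrow> 'a.
               (\<forall>t\<ge>0. (y has_vector_derivative (- g (y t))) (at t within {0..})) \<longrightarrow>
               (\<exists>T. \<forall>t\<ge>T. norm (y t) \<le> B'))"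
proof -
  obtain L where L: "\<forall>x y. norm (g x - g y) \<le> L * norm (x - y)" using grad_lip by blast
  define L1 where "L1 = \<bar>L\<bar> + 1"
  have L1: "norm (g x - g y) \<le> L1 * norm (x - y)" for x y
  proof -
    have "L * norm (x - y) \<le> L1 * norm (x - y)" unfolding L1_def by (intro mult_right_mono) auto
    moreover have "norm (g x - g y) \<le> L * norm (x - y)" using L by blast
    ultimately show ?thesis by linarith
  qed
  have L1pos: "L1 > 0" unfolding L1_def by simp
  have Gf: "G \<theta> = - (F \<theta> \<bullet> \<theta>) / 2" for \<theta> by (rule G_formula[OF grad F_lim G_lim])
  have Gh: "G (k *\<^sub>R \<theta>) = k\<^sup>2 * G \<theta>" if "k > 0" for k \<theta> using G_homog[OF G_lim that] .
  obtain G' where G'': "\<forall>x. (G has_derivative (\<lambda>h. G' x \<bullet> h)) (at x)" using G_C1 by blast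
  have Gcont: "continuous_on UNIV G"
    by (rule continuous_at_imp_continuous_on) (use G'' has_derivative_continuous in blast)
  obtain b :: 'a where b: "b \<in> Basis" using nonempty_Basis by blast
  have "\<exists>\<theta>\<in>sphere 0 1. \<forall>\<phi>\<in>sphere 0 1. G \<theta> \<le> G \<phi>"
  proof (rule continuous_attains_inf)
    show "sphere (0::'a) 1 \<noteq> {}" using b by (auto simp: norm_Basis)
  qed (auto intro: continuous_on_subset[OF Gcont])
  then obtain \<theta>m where \<theta>m: "norm \<theta>m = 1" "\<And>\<phi>. norm \<phi> = 1 \<Longrightarrow> G \<theta>m \<le> G \<phi>" by auto
  define m where "m = G \<theta>m"
  have "\<theta>m \<noteq> 0" using \<theta>m(1) by auto
  then have mpos: "m > 0" using G_pos[of \<theta>m] by (simp add: m_def)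
  have Gsph: "norm \<phi> = 1 \<Longrightarrow> G \<phi> \<ge> m" for \<phi> using \<theta>m(2) by (simp add: m_def)
  have Glow: "G x \<ge> m * (norm x)\<^sup>2" for x
  proof (cases "x = 0")
    case True then show ?thesis using Gf[of 0] by simp
  next
    case False
    let ?u = "x /\<^sub>R norm x"
    have "G x = G (norm x *\<^sub>R ?u)" using False by simp
    also have "\<dots> = (norm x)\<^sup>2 * G ?u" by (rule Gh) (use False in auto)
    finally have e: "G x = (norm x)\<^sup>2 * G ?u" .
    have "G ?u \<ge> m" using Gsph False by simp
    then show ?thesis unfolding e using mult_right_mono[of m "G ?u" "(norm x)\<^sup>2"] by (simp add: mult.commute)
  qed
  have part1: "\<exists>B \<delta>. \<delta> > 0 \<and>
            (\<forall>x :: real \<Rightarrow> 'a.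
               (\<forall>t\<ge>0. (x has_vector_derivative F (x t)) (at t within {0..})) \<longrightarrow>
               (\<forall>t\<ge>0. (norm (x t))\<^sup>2 \<le> B * (norm (x 0))\<^sup>2 * exp (- \<delta> * t)))"
  proof -
  have main: "(norm (x t))\<^sup>2 \<le> 1 * (norm (x 0))\<^sup>2 * exp (- (4*m) * t)"
    if D: "\<forall>t\<ge>0. (x has_vector_derivative F (x t)) (at t within {0..})" and t: "0 \<le> t"
    for x :: "real \<Rightarrow> 'a" and t :: real
  proof -
    define W where "W u = (norm (x u))\<^sup>2 * exp (4*m*u)" for u
    have "W t \<le> W 0"
    proof (rule decr_lemma[where W'="\<lambda>u. (2 * (x u \<bullet> F (x u))) * exp (4*m*u) + (exp (4*m*u) * (4*m)) * (norm (x u))\<^sup>2"])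
      fix u :: real assume u: "0 \<le> u"
      have e: "((\<lambda>u. exp (4*m*u)) has_real_derivative exp (4*m*u) * (4*m)) (at u within {0..})"
        by (auto intro!: derivative_eq_intros)
      show "(W has_real_derivative (2 * (x u \<bullet> F (x u))) * exp (4*m*u) + (exp (4*m*u) * (4*m)) * (norm (x u))\<^sup>2) (at u within {0..})"
        unfolding W_def[abs_def] by (rule DERIV_mult[OF normsq_deriv[OF D[rule_format, OF u]] e])
      have "x u \<bullet> F (x u) = - 2 * G (x u)" using Gf[of "x u"] by (simp add: inner_commute)
      moreover have "G (x u) \<ge> m * (norm (x u))\<^sup>2" by (rule Glow)
      ultimately have "2 * (x u \<bullet> F (x u)) + 4 * m * (norm (x u))\<^sup>2 \<le> 0" by linarith
      then have "(2 * (x u \<bullet> F (x u)) + 4 * m * (norm (x u))\<^sup>2) * exp (4*m*u) \<le> 0"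
        by (simp add: mult_nonpos_nonneg)
      then show "(2 * (x u \<bullet> F (x u))) * exp (4*m*u) + (exp (4*m*u) * (4*m)) * (norm (x u))\<^sup>2 \<le> 0"
        by (simp add: algebra_simps)
    qed (rule t)
    then have "(norm (x t))\<^sup>2 * exp (4*m*t) \<le> (norm (x 0))\<^sup>2" by (simp add: W_def)
    then have "(norm (x t))\<^sup>2 * exp (4*m*t) * exp (- (4*m) * t) \<le> (norm (x 0))\<^sup>2 * exp (- (4*m) * t)"
      by (intro mult_right_mono) auto
    then show ?thesis
      by (simp add: mult.assoc exp_add[symmetric])
  qed
  show ?thesis
    apply (rule exI[of _ "1::real"], rule exI[of _ "4*m"], rule conjI)
    using mpos apply simp
    using main apply blast
    done
  qed
  define ng where "ng = norm (g 0)"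
  define \<delta>0 where "\<delta>0 = m / (2 * (2 * L1 + ng))"
  have ng0: "ng \<ge> 0" unfolding ng_def by simp
  have \<delta>0pos: "\<delta>0 > 0" unfolding \<delta>0_def using mpos L1pos ng0 by simp
  have gbound: "norm (g z) \<le> ng + L1 * norm z" for z
  proof -
    have "norm (g z) \<le> norm (g 0) + norm (g z - g 0)" by (rule norm_triangle_sub)
    also have "norm (g z - g 0) \<le> L1 * norm z" using L1[of z 0] by simp
    finally show ?thesis unfolding ng_def by simp
  qed
  have close: "g (r *\<^sub>R \<theta>) \<bullet> \<theta> / r \<ge> g (r *\<^sub>R \<theta>0) \<bullet> \<theta>0 / r - m / 2"
    if th: "norm \<theta> = 1" "norm \<theta>0 = 1" "norm (\<theta> - \<theta>0) < \<delta>0" and r: "r \<ge> 1" for \<theta> \<theta>0 r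
  proof -
    define nd where "nd = norm (\<theta> - \<theta>0)"
    have nd0: "nd \<ge> 0" unfolding nd_def by simp
    have a: "\<bar>(g (r *\<^sub>R \<theta>) - g (r *\<^sub>R \<theta>0)) \<bullet> \<theta>\<bar> \<le> L1 * r * nd"
    proof -
      have "\<bar>(g (r *\<^sub>R \<theta>) - g (r *\<^sub>R \<theta>0)) \<bullet> \<theta>\<bar> \<le> norm (g (r *\<^sub>R \<theta>) - g (r *\<^sub>R \<theta>0)) * norm \<theta>"
        by (rule Cauchy_Schwarz_ineq2)
      also have "\<dots> = norm (g (r *\<^sub>R \<theta>) - g (r *\<^sub>R \<theta>0))" using th by simp
      also have "\<dots> \<le> L1 * norm (r *\<^sub>R \<theta> - r *\<^sub>R \<theta>0)" by (rule L1)
      also have "norm (r *\<^sub>R \<theta> - r *\<^sub>R \<theta>0) = r * nd"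
        using r unfolding nd_def by (simp add: scaleR_diff_right[symmetric])
      finally show ?thesis by (simp add: mult.assoc)
    qed
    have nb: "norm (g (r *\<^sub>R \<theta>0)) \<le> r * (ng + L1)"
    proof -
      have "norm (g (r *\<^sub>R \<theta>0)) \<le> ng + L1 * r" using gbound[of "r *\<^sub>R \<theta>0"] th r by simp
      also have "ng \<le> r * ng" using r ng0 by (simp add: mult_le_cancel_right1)
      finally show ?thesis by (simp add: algebra_simps)
    qed
    have b: "\<bar>g (r *\<^sub>R \<theta>0) \<bullet> (\<theta> - \<theta>0)\<bar> \<le> r * (ng + L1) * nd"
    proof -
      have "\<bar>g (r *\<^sub>R \<theta>0) \<bullet> (\<theta> - \<theta>0)\<bar> \<le> norm (g (r *\<^sub>R \<theta>0)) * nd"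
        unfolding nd_def by (rule Cauchy_Schwarz_ineq2)
      also have "\<dots> \<le> r * (ng + L1) * nd" by (rule mult_right_mono[OF nb nd0])
      finally show ?thesis .
    qed
    have eq: "g (r *\<^sub>R \<theta>) \<bullet> \<theta> - g (r *\<^sub>R \<theta>0) \<bullet> \<theta>0
        = (g (r *\<^sub>R \<theta>) - g (r *\<^sub>R \<theta>0)) \<bullet> \<theta> + g (r *\<^sub>R \<theta>0) \<bullet> (\<theta> - \<theta>0)"
      by (simp add: inner_diff_left inner_diff_right)
    have "r * (2 * L1 + ng) * nd \<le> r * (2 * L1 + ng) * \<delta>0"
      using th(3) r L1pos ng0 unfolding nd_def by (intro mult_left_mono) auto
    also have "r * (2 * L1 + ng) * \<delta>0 = r * (m / 2)"
    proof -
      have "2 * L1 + ng \<noteq> 0" using L1pos ng0 by simp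
      then show ?thesis unfolding \<delta>0_def by (simp add: field_simps)
    qed
    finally have c: "r * (2 * L1 + ng) * nd \<le> r * (m / 2)" .
    have "g (r *\<^sub>R \<theta>) \<bullet> \<theta> - g (r *\<^sub>R \<theta>0) \<bullet> \<theta>0 \<ge> - (L1 * r * nd + r * (ng + L1) * nd)"
      using a b unfolding eq by linarith
    moreover have "L1 * r * nd + r * (ng + L1) * nd = r * (2 * L1 + ng) * nd" by (simp add: algebra_simps)
    ultimately have "g (r *\<^sub>R \<theta>) \<bullet> \<theta> - g (r *\<^sub>R \<theta>0) \<bullet> \<theta>0 \<ge> - (r * (m / 2))" using c by linarith
    then have "(g (r *\<^sub>R \<theta>) \<bullet> \<theta> - g (r *\<^sub>R \<theta>0) \<bullet> \<theta>0) / r \<ge> - (m / 2)"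
      using r by (simp add: le_divide_eq algebra_simps)
    then show ?thesis by (simp add: diff_divide_distrib)
  qed
  have pw: "((\<lambda>r. g (r *\<^sub>R \<theta>0) \<bullet> \<theta>0 / r) \<longlongrightarrow> 2 * G \<theta>0) at_top" for \<theta>0
  proof -
    have "((\<lambda>r. - (((- g (r *\<^sub>R \<theta>0)) /\<^sub>R r) \<bullet> \<theta>0)) \<longlongrightarrow> - (F \<theta>0 \<bullet> \<theta>0)) at_top"
      by (intro tendsto_minus tendsto_inner F_lim tendsto_const)
    moreover have "(\<lambda>r. - (((- g (r *\<^sub>R \<theta>0)) /\<^sub>R r) \<bullet> \<theta>0)) = (\<lambda>r. g (r *\<^sub>R \<theta>0) \<bullet> \<theta>0 / r)"
      by (auto simp: fun_eq_iff divide_inverse mult.commute)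
    ultimately show ?thesis using Gf[of \<theta>0] by simp
  qed
  have "\<exists>R\<ge>1. \<forall>\<theta> r. norm \<theta> = 1 \<longrightarrow> r \<ge> R \<longrightarrow> g (r *\<^sub>R \<theta>) \<bullet> \<theta> / r \<ge> m"
  proof -
    have cov: "sphere (0::'a) 1 \<subseteq> (\<Union>c\<in>sphere 0 1. ball c \<delta>0)"
    proof
      fix c :: 'a assume "c \<in> sphere 0 1"
      then show "c \<in> (\<Union>c\<in>sphere 0 1. ball c \<delta>0)" using \<delta>0pos by (intro UN_I[of c]) auto
    qed
    obtain D :: "'a set" where D: "D \<subseteq> sphere 0 1" "finite D" "sphere 0 1 \<subseteq> (\<Union>c\<in>D. ball c \<delta>0)"
      by (rule compactE_image[OF compact_sphere _ cov]) auto
    have "\<forall>\<theta>0\<in>D. \<forall>\<^sub>F r in at_top. g (r *\<^sub>R \<theta>0) \<bullet> \<theta>0 / r > 3 * m / 2"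
    proof
      fix \<theta>0 assume "\<theta>0 \<in> D"
      then have "norm \<theta>0 = 1" using D(1) by auto
      then have "2 * G \<theta>0 > 3 * m / 2" using Gsph[of \<theta>0] mpos by simp
      then show "\<forall>\<^sub>F r in at_top. g (r *\<^sub>R \<theta>0) \<bullet> \<theta>0 / r > 3 * m / 2"
        using order_tendstoD(1)[OF pw] by blast
    qed
    then have "\<forall>\<^sub>F r in at_top. \<forall>\<theta>0\<in>D. g (r *\<^sub>R \<theta>0) \<bullet> \<theta>0 / r > 3 * m / 2"
      by (rule eventually_ball_finite[OF D(2)])
    moreover have "\<forall>\<^sub>F r in at_top. r \<ge> (1::real)" by (rule eventually_ge_at_top)
    ultimately have "\<forall>\<^sub>F r in at_top. r \<ge> 1 \<and> (\<forall>\<theta>0\<in>D. g (r *\<^sub>R \<theta>0) \<bullet> \<theta>0 / r > 3 * m / 2)"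
      by eventually_elim auto
    then obtain R where R: "\<And>r. r \<ge> R \<Longrightarrow> r \<ge> 1 \<and> (\<forall>\<theta>0\<in>D. g (r *\<^sub>R \<theta>0) \<bullet> \<theta>0 / r > 3 * m / 2)"
      by (auto simp: eventually_at_top_linorder)
    show ?thesis
    proof (intro exI[of _ "max R 1"] conjI allI impI)
      fix \<theta> :: 'a and r :: real assume th: "norm \<theta> = 1" and r: "max R 1 \<le> r"
      have "\<theta> \<in> sphere 0 1" using th by simp
      then have "\<theta> \<in> (\<Union>c\<in>D. ball c \<delta>0)" using D(3) by blast
      then obtain \<theta>0 where t0: "\<theta>0 \<in> D" "dist \<theta>0 \<theta> < \<delta>0" by auto
      have n0: "norm \<theta>0 = 1" using t0 D(1) by auto
      have "norm (\<theta> - \<theta>0) < \<delta>0" using t0(2) by (simp add: dist_norm norm_minus_commute)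
      from close[OF th n0 this] r have "g (r *\<^sub>R \<theta>) \<bullet> \<theta> / r \<ge> g (r *\<^sub>R \<theta>0) \<bullet> \<theta>0 / r - m / 2" by simp
      moreover have "g (r *\<^sub>R \<theta>0) \<bullet> \<theta>0 / r > 3 * m / 2" using R[of r] r t0(1) by simp
      ultimately show "g (r *\<^sub>R \<theta>) \<bullet> \<theta> / r \<ge> m" by linarith
    qed simp
  qed
  then obtain R where R1: "R \<ge> 1" and R: "\<And>\<theta> r. norm \<theta> = 1 \<Longrightarrow> r \<ge> R \<Longrightarrow> g (r *\<^sub>R \<theta>) \<bullet> \<theta> / r \<ge> m"
    by blast
  define C where "C = m * R\<^sup>2 + (ng + L1 * R) * R"
  have C0: "C \<ge> 0" unfolding C_def using mpos R1 ng0 L1pos by simp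
  have glow: "g x \<bullet> x \<ge> m * (norm x)\<^sup>2 - C" for x
  proof (cases "norm x \<ge> R")
    case True
    then have xn: "norm x > 0" using R1 by linarith
    have "g (norm x *\<^sub>R (x /\<^sub>R norm x)) \<bullet> (x /\<^sub>R norm x) / norm x \<ge> m"
      using R[of "x /\<^sub>R norm x" "norm x"] True xn by simp
    then have "(g x \<bullet> x) / (norm x)\<^sup>2 \<ge> m" using xn by (simp add: power2_eq_square divide_inverse mult_ac)
    then have "g x \<bullet> x \<ge> m * (norm x)\<^sup>2" using xn by (simp add: le_divide_eq)
    moreover note C0
    ultimately show ?thesis by linarith
  next
    case False
    have "\<bar>g x \<bullet> x\<bar> \<le> norm (g x) * norm x" by (rule Cauchy_Schwarz_ineq2)
    also have "\<dots> \<le> (ng + L1 * R) * R"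
    proof (rule mult_mono)
      have "L1 * norm x \<le> L1 * R" using False L1pos by (intro mult_left_mono) auto
      then show "norm (g x) \<le> ng + L1 * R" using gbound[of x] by linarith
    qed (use False ng0 L1pos R1 in auto)
    finally have a: "g x \<bullet> x \<ge> - ((ng + L1 * R) * R)" by linarith
    have "m * (norm x)\<^sup>2 \<le> m * R\<^sup>2"
      using False mpos by (intro mult_left_mono power_mono) auto
    with a show ?thesis unfolding C_def by linarith
  qed
  have part2: "\<exists>B'. \<forall>y :: real \<Rightarrow> 'a.
               (\<forall>t\<ge>0. (y has_vector_derivative (- g (y t))) (at t within {0..})) \<longrightarrow>
               (\<exists>T. \<forall>t\<ge>T. norm (y t) \<le> B')"
  proof -
  have main: "\<exists>T. \<forall>t\<ge>T. norm (y t) \<le> sqrt (C / m + 1)"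
    if D: "\<forall>t\<ge>0. (y has_vector_derivative (- g (y t))) (at t within {0..})" for y :: "real \<Rightarrow> 'a"
  proof -
    define W where "W u = ((norm (y u))\<^sup>2 - C / m) * exp (2*m*u)" for u
    have Wd: "W t \<le> W 0" if t: "t \<ge> 0" for t
    proof (rule decr_lemma[where W'="\<lambda>u. (2 * (y u \<bullet> - g (y u)) - 0) * exp (2*m*u) + (exp (2*m*u) * (2*m)) * ((norm (y u))\<^sup>2 - C / m)"])
      fix u :: real assume u: "0 \<le> u"
      have e: "((\<lambda>u. exp (2*m*u)) has_real_derivative exp (2*m*u) * (2*m)) (at u within {0..})"
        by (auto intro!: derivative_eq_intros)
      show "(W has_real_derivative (2 * (y u \<bullet> - g (y u)) - 0) * exp (2*m*u) + (exp (2*m*u) * (2*m)) * ((norm (y u))\<^sup>2 - C / m)) (at u within {0..})"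
        unfolding W_def[abs_def]
        by (rule DERIV_mult[OF DERIV_diff[OF normsq_deriv[OF D[rule_format, OF u]] DERIV_const] e])
      have "2 * (y u \<bullet> - g (y u)) + 2 * m * ((norm (y u))\<^sup>2 - C / m) = 2 * (m * (norm (y u))\<^sup>2 - C - g (y u) \<bullet> y u)"
        using mpos by (simp add: algebra_simps inner_commute)
      also have "\<dots> \<le> 0" using glow[of "y u"] by simp
      finally have "(2 * (y u \<bullet> - g (y u)) + 2 * m * ((norm (y u))\<^sup>2 - C / m)) * exp (2*m*u) \<le> 0"
        by (simp add: mult_nonpos_nonneg)
      moreover have alg: "\<And>a b c E::real. (a - 0) * E + (E * b) * c = (a + b * c) * E"
        by (simp add: algebra_simps)
      ultimately show "(2 * (y u \<bullet> - g (y u)) - 0) * exp (2*m*u) + (exp (2*m*u) * (2*m)) * ((norm (y u))\<^sup>2 - C / m) \<le> 0"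
        by (simp only: alg)
    qed (rule t)
    define T where "T = ln ((norm (y 0))\<^sup>2 + 1) / (2 * m)"
    have T0: "T \<ge> 0" unfolding T_def using mpos by simp
    show ?thesis
    proof (intro exI[of _ T] allI impI)
      fix t assume tT: "T \<le> t"
      then have t0: "t \<ge> 0" using T0 by simp
      have "0 < (norm (y 0))\<^sup>2 + 1" by (simp add: add_nonneg_pos)
      then have "exp (2 * m * T) = (norm (y 0))\<^sup>2 + 1" unfolding T_def using mpos by simp
      moreover have "exp (2 * m * T) \<le> exp (2 * m * t)" using tT mpos by simp
      ultimately have E: "(norm (y 0))\<^sup>2 + 1 \<le> exp (2 * m * t)" by simp
      have "W t \<le> W 0" by (rule Wd[OF t0])
      also have "W 0 \<le> (norm (y 0))\<^sup>2" unfolding W_def using mpos C0 by simp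
      finally have "((norm (y t))\<^sup>2 - C / m) * exp (2*m*t) < exp (2*m*t)" unfolding W_def using E by linarith
      then have "(norm (y t))\<^sup>2 - C / m < 1" by simp
      then show "norm (y t) \<le> sqrt (C / m + 1)" by (intro real_le_rsqrt) simp
    qed
  qed
  show ?thesis
    apply (rule exI[of _ "sqrt (C / m + 1)"])
    using main apply blast
    done
  qed
  from part1 part2 show ?thesis by blast
qed

end
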